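(* Let $n\ge1$, let $K$ be a simplicial complex on $[m]$, and let $c=c_1\times\dots\times c_m$ be a cell of $\mathcal{Z}_K(D^n,S^{n-1})$ with all $c_i\in\{-,+,\bullet\}$, such that $c(+)\ne-\infty$ and $c_i=+$ holds if and only if $i=c(+)$. Let $I=\{c(+)\}\cup\mathrm{supp}(c)$. Then $c\in\mathrm{Crit}(K)$ if and only if $c_I\in\mathrm{Crit}(K_I)$ and $K_I=2^I\setminus\{I\}$.
   Context: Give $D^n$ the regular CW structure with cells $e_-^i,e_+^i$ ($0\le i\le n-1$; $e_\pm^i$ the two open hemispheres of $S^i\subseteq S^{n-1}$, with closure of $e_\pm^{i}$ equal to $e_\pm^i\cup\bigcup_{j<i}(e_-^j\cup e_+^j)$) and top cell $e_\bullet^n$; products of disks get the product cell structure. Write $-,+,\bullet$ for $e_-^0,e_+^{n-1},e_\bullet^n$. A simplicial complex $L$ on a finite totally ordered ground set $V=\{v_1<\dots<v_k\}$ (identified with $[k]$ via $v_j\mapsto j$) is a family of subsets of $V$ closed under subsets. $\mathrm{supp}(c)=\{i:c_i=\bullet\}$; $\mathcal{Z}_L(D^n,S^{n-1})$ is the subcomplex of $(D^n)^k$ of cells $c$ with $\mathrm{supp}(c)\in L$; $G_L$ is the directed graph on these cells with edges $c\to c'$ when $c'$ lies in the closure of $c$ and $\dim c'=\dim c-1$. Let $\mathcal{M}$ consist of $e_-^{i+1}\to e_+^i$ ($0\le i\le n-2$) and $e_\bullet^n\to e_+^{n-1}$. Put $\mathcal{M}_1=\{c\to c'\in G_L:c_1\to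 c_1'\in\mathcal{M}\}$ and for $1\le j\le k-1$, $\mathcal{M}_{j+1}=\{c\to c'\in G_L:$ neither $c$ nor $c'$ lies in an edge of $\mathcal{M}_1\cup\dots\cup\mathcal{M}_j$, and $c_{j+1}\to c'_{j+1}\in\mathcal{M}\}$; $\mathcal{M}_L=\bigcup_j\mathcal{M}_j$. $\mathrm{Crit}(L)$ is the set of cells lying in no edge of $\mathcal{M}_L$. For $I\subseteq[m]$, $K_I=\{\sigma\in K:\sigma\subseteq I\}$ is regarded as a complex on the ordered ground set $I$, and $c_I$ is the product of the $c_i$, $i\in I$, in increasing order of $i$. $2^I$ is the set of all subsets of $I$. $c(+)=\min\{i:c_i=+\}$, or $-\infty$ if no coordinate is $+$. *)

theory Defs
  imports Main
begin

text \<open>Cells of the regular CW structure on D^n: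
  DMinus i = e_-^i, DPlus i = e_+^i (0 <= i <= n-1), DBul = e_bullet^n.\<close>
datatype dcell = DMinus nat | DPlus nat | DBul

definition dcell_ok :: "nat \<Rightarrow> dcell \<Rightarrow> bool" where
  "dcell_ok n x = (case x of DMinus i \<Rightarrow> i < n | DPlus i \<Rightarrow> i < n | DBul \<Rightarrow> True)"

definition ddim :: "nat \<Rightarrow> dcell \<Rightarrow> nat" where
  "ddim n x = (case x of DMinus i \<Rightarrow> i | DPlus i \<Rightarrow> i | DBul \<Rightarrow> n)"

definition dface :: "nat \<Rightarrow> dcell \<Rightarrow> dcell \<Rightarrow> bool" where
  "dface n x y = (dcell_ok n x \<and> dcell_ok n y \<and>
     (case x of
        DBul \<Rightarrow> True
      | DMinus i \<Rightarrow> (y = x \<or> (\<exists>j<i. y = DMinus j \<or> y = DPlus j))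
      | DPlus i \<Rightarrow> (y = x \<or> (\<exists>j<i. y = DMinus j \<or> y = DPlus j))))"

definition dmatch :: "nat \<Rightarrow> dcell \<Rightarrow> dcell \<Rightarrow> bool" where
  "dmatch n x y = ((\<exists>i. i \<le> n - 2 \<and> n \<ge> 2 \<and> x = DMinus (i+1) \<and> y = DPlus i)
                  \<or> (x = DBul \<and> y = DPlus (n - 1)))"

definition is_complex :: "nat set \<Rightarrow> nat set set \<Rightarrow> bool" where
  "is_complex V L = ((\<forall>\<sigma>\<in>L. \<sigma> \<subseteq> V) \<and> (\<forall>\<sigma>\<in>L. \<forall>\<tau>. \<tau> \<subseteq> \<sigma> \<longrightarrow> \<tau> \<in> L))"

text \<open>A cell of a product of disks over the ground set V is a map with domain V.\<close>
type_synonym pcell = "nat \<Rightarrow> dcell option"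

definition supp :: "pcell \<Rightarrow> nat set" where
  "supp c = {i. c i = Some DBul}"

definition zk_cell :: "nat \<Rightarrow> nat set \<Rightarrow> nat set set \<Rightarrow> pcell \<Rightarrow> bool" where
  "zk_cell n V L c = (dom c = V \<and> (\<forall>i\<in>V. dcell_ok n (the (c i))) \<and> supp c \<in> L)"

definition pdim :: "nat \<Rightarrow> nat set \<Rightarrow> pcell \<Rightarrow> nat" where
  "pdim n V c = (\<Sum>i\<in>V. ddim n (the (c i)))"

definition gedge :: "nat \<Rightarrow> nat set \<Rightarrow> nat set set \<Rightarrow> pcell \<Rightarrow> pcell \<Rightarrow> bool" where
  "gedge n V L c c' = (zk_cell n V L c \<and> zk_cell n V L c' \<and>
      (\<forall>i\<in>V. dface n (the (c i)) (the (c' i))) \<and> pdim n V c' + 1 = pdim n V c)"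

definition covered :: "(pcell \<times> pcell) set \<Rightarrow> pcell set" where
  "covered E = fst ` E \<union> snd ` E"

text \<open>Mupto n V L j = M_1 \<union> ... \<union> M_j, where the j-th step uses the j-th
  smallest element of V.\<close>
fun Mupto :: "nat \<Rightarrow> nat set \<Rightarrow> nat set set \<Rightarrow> nat \<Rightarrow> (pcell \<times> pcell) set" where
  "Mupto n V L 0 = {}"
| "Mupto n V L (Suc j) = Mupto n V L j \<union>
     {(c, c'). gedge n V L c c' \<and> c \<notin> covered (Mupto n V L j) \<and> c' \<notin> covered (Mupto n V L j)
        \<and> (let v = sorted_list_of_set V ! j in dmatch n (the (c v)) (the (c' v)))}"

definition M_L :: "nat \<Rightarrow> nat set \<Rightarrow> nat set set \<Rightarrow> (pcell \<times> pcell) set" where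
  "M_L n V L = Mupto n V L (card V)"

definition Crit :: "nat \<Rightarrow> nat set \<Rightarrow> nat set set \<Rightarrow> pcell set" where
  "Crit n V L = {c. zk_cell n V L c \<and> c \<notin> covered (M_L n V L)}"

text \<open>c(+): least index with c_i = + (None represents -infinity).\<close>
definition cplus :: "nat \<Rightarrow> pcell \<Rightarrow> nat option" where
  "cplus n c = (if \<exists>i. c i = Some (DPlus (n - 1))
               then Some (LEAST i. c i = Some (DPlus (n - 1))) else None)"

definition full_sub :: "nat set set \<Rightarrow> nat set \<Rightarrow> nat set set" where
  "full_sub K I = {\<sigma>\<in>K. \<sigma> \<subseteq> I}"

end

theory Submission imports Defs begin

definition pre :: "nat set \<Rightarrow> nat \<Rightarrow> nat set" where
  "pre V j = set (take j (sorted_list_of_set V))"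

lemma pre_0[simp]: "pre V 0 = {}" by (simp add: pre_def)

lemma pre_Suc: "finite V \<Longrightarrow> j < card V \<Longrightarrow>
   pre V (Suc j) = insert (sorted_list_of_set V ! j) (pre V j)"
  unfolding pre_def by (simp add: take_Suc_conv_app_nth)

lemma pre_full: "finite V \<Longrightarrow> pre V (card V) = V"
  unfolding pre_def by simp

lemma nth_in: "finite V \<Longrightarrow> j < card V \<Longrightarrow> sorted_list_of_set V ! j \<in> V"
  by (metis length_sorted_list_of_set nth_mem set_sorted_list_of_set)

lemma pre_sub: "finite V \<Longrightarrow> pre V j \<subseteq> V"
  unfolding pre_def by (metis set_sorted_list_of_set set_take_subset)

lemma strict_sls: "sorted_wrt (<) (sorted_list_of_set (V::nat set))"
  using sorted_list_of_set.strict_sorted_key_list_of_set[of V] by simp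

lemma pre_lt: assumes "finite V" "j < card V" "i \<in> pre V j"
  shows "i < sorted_list_of_set V ! j"
proof -
  let ?xs = "sorted_list_of_set V"
  have len: "length ?xs = card V" by simp
  from assms(3) obtain k where k: "k < length (take j ?xs)" "take j ?xs ! k = i"
    unfolding pre_def in_set_conv_nth by blast
  have kj: "k < j" using k(1) by simp
  have ik: "i = ?xs ! k" using k kj by simp
  show ?thesis unfolding ik
    by (rule sorted_wrt_nth_less[OF strict_sls kj]) (use assms(2) len in simp)
qed

lemma find_index: assumes "finite V" "a \<in> V"
  shows "\<exists>j<card V. sorted_list_of_set V ! j = a \<and> pre V j = {i\<in>V. i < a}"
proof -
  let ?xs = "sorted_list_of_set V"
  have st: "sorted_wrt (<) ?xs" by (rule strict_sls)
  have len: "length ?xs = card V" by simp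
  have setx: "set ?xs = V" using assms(1) by simp
  have "a \<in> set ?xs" using assms(2) setx by simp
  then obtain j where j: "j < length ?xs" "?xs ! j = a"
    unfolding in_set_conv_nth by blast
  have "pre V j = {i\<in>V. i < a}"
  proof
    show "pre V j \<subseteq> {i\<in>V. i < a}"
    proof
      fix i assume i: "i \<in> pre V j"
      have "i < ?xs ! j" by (rule pre_lt[OF assms(1) _ i]) (use j len in simp)
      moreover have "i \<in> V" using pre_sub[OF assms(1), of j] i by blast
      ultimately show "i \<in> {i\<in>V. i < a}" using j by simp
    qed
    show "{i\<in>V. i < a} \<subseteq> pre V j"
    proof
      fix i assume i: "i \<in> {i\<in>V. i < a}"
      then have "i \<in> set ?xs" using setx by simp
      then obtain k where k: "k < length ?xs" "?xs ! k = i"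
        unfolding in_set_conv_nth by blast
      have "k < j"
      proof (rule ccontr)
        assume "\<not> k < j"
        then have "j < k \<or> j = k" by auto
        then have "a \<le> i"
        proof
          assume "j < k" then show "a \<le> i" using sorted_wrt_nth_less[OF st, of j k] k j by simp
        next
          assume "j = k" then show "a \<le> i" using k j by simp
        qed
        then show False using i by simp
      qed
      then have "i = take j ?xs ! k" using k by simp
      moreover have "k < length (take j ?xs)" using \<open>k<j\<close> k by simp
      ultimately have "i \<in> set (take j ?xs)" by (simp only: nth_mem)
      then show "i \<in> pre V j" unfolding pre_def .
    qed
  qed
  then show ?thesis using j len by auto
qed

definition downcl :: "nat set set \<Rightarrow> bool" where
  "downcl L = (\<forall>\<sigma>\<in>L. \<forall>\<tau>. \<tau> \<subseteq> \<sigma> \<longrightarrow> \<tau> \<in> L)"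

lemma downclD: "downcl L \<Longrightarrow> \<sigma> \<in> L \<Longrightarrow> \<tau> \<subseteq> \<sigma> \<Longrightarrow> \<tau> \<in> L"
  unfolding downcl_def by blast

lemma dface_dim: "dface n x y \<Longrightarrow> ddim n y \<le> ddim n x \<and> (ddim n y = ddim n x \<longrightarrow> y = x)"
  unfolding dface_def dcell_ok_def ddim_def by (auto split: dcell.splits)

lemma gedge_other:
  assumes "finite V" "gedge n V L c c'" "q \<in> V" "ddim n (the (c' q)) + 1 = ddim n (the (c q))"
  shows "c' = c(q := c' q)"
proof -
  have f: "\<forall>i\<in>V. dface n (the (c i)) (the (c' i))" using assms(2) unfolding gedge_def by blast
  have pd: "pdim n V c' + 1 = pdim n V c" using assms(2) unfolding gedge_def by blast
  have dc: "dom c = V" using assms(2) unfolding gedge_def zk_cell_def by blast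
  have dc': "dom c' = V" using assms(2) unfolding gedge_def zk_cell_def by blast
  have le: "\<forall>i\<in>V. ddim n (the (c' i)) \<le> ddim n (the (c i))" using f dface_dim by blast
  have eq: "\<forall>i\<in>V-{q}. ddim n (the (c' i)) = ddim n (the (c i))"
  proof (rule ccontr)
    assume "\<not> (\<forall>i\<in>V-{q}. ddim n (the (c' i)) = ddim n (the (c i)))"
    then obtain a where a: "a \<in> V-{q}" "ddim n (the (c' a)) \<noteq> ddim n (the (c a))" by blast
    have lt: "ddim n (the (c' a)) < ddim n (the (c a))" using a le by (meson DiffD1 le_neq_trans)
    have "(\<Sum>i\<in>V-{q}. ddim n (the (c' i))) < (\<Sum>i\<in>V-{q}. ddim n (the (c i)))"
    proof (rule sum_strict_mono_ex1)
      show "finite (V-{q})" using assms(1) by blast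
      show "\<forall>x\<in>V-{q}. ddim n (the (c' x)) \<le> ddim n (the (c x))" using le by blast
      show "\<exists>a\<in>V-{q}. ddim n (the (c' a)) < ddim n (the (c a))" using a(1) lt by blast
    qed
    moreover have "pdim n V c = ddim n (the (c q)) + (\<Sum>i\<in>V-{q}. ddim n (the (c i)))"
      unfolding pdim_def by (rule sum.remove[OF assms(1,3)])
    moreover have "pdim n V c' = ddim n (the (c' q)) + (\<Sum>i\<in>V-{q}. ddim n (the (c' i)))"
      unfolding pdim_def by (rule sum.remove[OF assms(1,3)])
    ultimately show False using pd assms(4) by linarith
  qed
  have "\<forall>i. c' i = (c(q := c' q)) i"
  proof
    fix i
    show "c' i = (c(q := c' q)) i"
    proof (cases "i \<in> V - {q}")
      case True
      then have "the (c' i) = the (c i)" using eq f dface_dim by blast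
      moreover have "i \<in> dom c'" "i \<in> dom c" using True dc dc' by simp_all
      moreover obtain x where x: "c' i = Some x" using domD calculation(2) by blast
      moreover obtain y where y: "c i = Some y" using domD calculation(3) by blast
      ultimately have "c' i = c i" by simp
      then show ?thesis using True by simp
    next
      case False
      then show ?thesis using dc dc' by auto
    qed
  qed
  then show ?thesis by (intro ext) blast
qed


lemma supp_upd: "supp (d(q := Some x)) = (if x = DBul then insert q (supp d) else supp d - {q})"
  unfolding supp_def by auto

lemma pdim_rem: assumes "finite V" "q \<in> V"
  shows "pdim n V d = ddim n (the (d q)) + (\<Sum>i\<in>V-{q}. ddim n (the (d i)))"
  unfolding pdim_def by (rule sum.remove[OF assms])

lemma pdim_upd: assumes "finite V" "q \<in> V"
  shows "pdim n V (d(q := Some x)) = ddim n x + (\<Sum>i\<in>V-{q}. ddim n (the (d i)))"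
proof -
  have "pdim n V (d(q := Some x)) = ddim n (the ((d(q := Some x)) q)) + (\<Sum>i\<in>V-{q}. ddim n (the ((d(q := Some x)) i)))"
    by (rule pdim_rem[OF assms])
  also have "(\<Sum>i\<in>V-{q}. ddim n (the ((d(q := Some x)) i))) = (\<Sum>i\<in>V-{q}. ddim n (the (d i)))"
    by (rule sum.cong) auto
  finally show ?thesis by (simp only: fun_upd_same option.sel)
qed


lemma gedge_BP:
  assumes "finite V" "n \<ge> 1" "downcl L" "q \<in> V" "zk_cell n V L d" "d q = Some DBul"
  shows "gedge n V L d (d(q := Some (DPlus (n-1))))"
proof -
  have z: "dom d = V" "\<forall>i\<in>V. dcell_ok n (the (d i))" "supp d \<in> L" using assms(5) unfolding zk_cell_def by auto
  have s: "supp (d(q := Some (DPlus (n-1)))) \<in> L"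
    using assms(3) z(3) unfolding supp_upd downcl_def by auto
  have z2: "zk_cell n V L (d(q := Some (DPlus (n-1))))"
    unfolding zk_cell_def using z s assms(2,4) by (auto simp: dcell_ok_def)
  have fc: "\<forall>i\<in>V. dface n (the (d i)) (the ((d(q := Some (DPlus (n-1)))) i))"
    using z(2) assms(2,6) by (auto simp: dface_def dcell_ok_def split: dcell.splits)
  have "pdim n V d = n + (\<Sum>i\<in>V-{q}. ddim n (the (d i)))"
    using pdim_rem[OF assms(1,4), of n d] assms(6) by (simp add: ddim_def)
  moreover have "pdim n V (d(q := Some (DPlus (n-1)))) = (n-1) + (\<Sum>i\<in>V-{q}. ddim n (the (d i)))"
    using pdim_upd[OF assms(1,4)] by (simp add: ddim_def)
  ultimately show ?thesis unfolding gedge_def using assms(5) z2 fc assms(2) by simp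
qed

lemma gedge_PB:
  assumes "finite V" "n \<ge> 1" "downcl L" "q \<in> V" "zk_cell n V L d" "d q = Some (DPlus (n-1))"
    "insert q (supp d) \<in> L"
  shows "gedge n V L (d(q := Some DBul)) d"
proof -
  have z: "zk_cell n V L (d(q := Some DBul))"
    using assms(4,5,7) unfolding zk_cell_def supp_upd by (auto simp: dcell_ok_def)
  have "gedge n V L (d(q := Some DBul)) ((d(q := Some DBul))(q := Some (DPlus (n-1))))"
    by (rule gedge_BP[OF assms(1-4) z]) simp
  moreover have "(d(q := Some DBul))(q := Some (DPlus (n-1))) = d" using assms(6) by auto
  ultimately show ?thesis by simp
qed

lemma covered_Un: "covered (A \<union> B) = covered A \<union> covered B"
  unfolding covered_def by blast

lemma covered_iff: "d \<in> covered E \<longleftrightarrow> (\<exists>c'. (d, c') \<in> E) \<or> (\<exists>c0. (c0, d) \<in> E)"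
  unfolding covered_def by force

lemma dm1: "x \<in> {DMinus 0, DPlus (n-1), DBul} \<Longrightarrow> dmatch n x y \<Longrightarrow> x = DBul \<and> y = DPlus (n-1)"
  unfolding dmatch_def by auto

lemma dm2: "y \<in> {DMinus 0, DPlus (n-1), DBul} \<Longrightarrow> dmatch n x y \<Longrightarrow> x = DBul \<and> y = DPlus (n-1)"
  unfolding dmatch_def by auto

lemma dom_some: "dom c = V \<Longrightarrow> q \<in> V \<Longrightarrow> c q = Some (the (c q))"
  by auto

lemma step:
  assumes fin: "finite V" and n1: "n \<ge> 1" and dl: "downcl L" and jl: "j < card V"
    and q: "q = sorted_list_of_set V ! j" and z: "zk_cell n V L d"
    and cls: "d q \<in> {Some (DMinus 0), Some (DPlus (n-1)), Some DBul}"
  shows "d \<in> covered (Mupto n V L (Suc j)) \<longleftrightarrow> d \<in> covered (Mupto n V L j)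
     \<or> (d q = Some DBul \<and> d \<notin> covered (Mupto n V L j) \<and> d(q := Some (DPlus (n-1))) \<notin> covered (Mupto n V L j))
     \<or> (d q = Some (DPlus (n-1)) \<and> insert q (supp d) \<in> L \<and> d \<notin> covered (Mupto n V L j)
          \<and> d(q := Some DBul) \<notin> covered (Mupto n V L j))"
proof -
  define New where "New = {(c, c'). gedge n V L c c' \<and> c \<notin> covered (Mupto n V L j) \<and> c' \<notin> covered (Mupto n V L j)
        \<and> dmatch n (the (c q)) (the (c' q))}"
  have M: "Mupto n V L (Suc j) = Mupto n V L j \<union> New"
    unfolding New_def using q by (simp add: Let_def)
  have qV: "q \<in> V" using nth_in[OF fin jl] q by simp
  have dd: "dom d = V" using z unfolding zk_cell_def by blast
  have cls': "the (d q) \<in> {DMinus 0, DPlus (n-1), DBul}" using cls by auto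
  have C1: "(\<exists>c'. (d, c') \<in> New) \<longleftrightarrow> (d q = Some DBul \<and> d \<notin> covered (Mupto n V L j) \<and> d(q := Some (DPlus (n-1))) \<notin> covered (Mupto n V L j))"
  proof
    assume "\<exists>c'. (d, c') \<in> New"
    then obtain c' where g: "gedge n V L d c'" and nd: "d \<notin> covered (Mupto n V L j)"
      and nc: "c' \<notin> covered (Mupto n V L j)" and dm: "dmatch n (the (d q)) (the (c' q))"
      unfolding New_def by blast
    have xy: "the (d q) = DBul" "the (c' q) = DPlus (n-1)" using dm1[OF cls' dm] by auto
    have dq: "d q = Some DBul" using dom_some[OF dd qV] xy by simp
    have dc': "dom c' = V" using g unfolding gedge_def zk_cell_def by blast
    have c'q: "c' q = Some (DPlus (n-1))" using dom_some[OF dc' qV] xy by simp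
    have "ddim n (the (c' q)) + 1 = ddim n (the (d q))" using xy n1 by (simp add: ddim_def)
    from gedge_other[OF fin g qV this] have "c' = d(q := c' q)" .
    then have "c' = d(q := Some (DPlus (n-1)))" using c'q by simp
    then show "d q = Some DBul \<and> d \<notin> covered (Mupto n V L j) \<and> d(q := Some (DPlus (n-1))) \<notin> covered (Mupto n V L j)"
      using dq nd nc by simp
  next
    assume a: "d q = Some DBul \<and> d \<notin> covered (Mupto n V L j) \<and> d(q := Some (DPlus (n-1))) \<notin> covered (Mupto n V L j)"
    have "gedge n V L d (d(q := Some (DPlus (n-1))))" using gedge_BP[OF fin n1 dl qV z] a by blast
    moreover have "dmatch n (the (d q)) (the ((d(q := Some (DPlus (n-1)))) q))"
      using a unfolding dmatch_def by simp
    ultimately have "(d, d(q := Some (DPlus (n-1)))) \<in> New" using a unfolding New_def by simp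
    then show "\<exists>c'. (d, c') \<in> New" by blast
  qed
  have C2: "(\<exists>c0. (c0, d) \<in> New) \<longleftrightarrow> (d q = Some (DPlus (n-1)) \<and> insert q (supp d) \<in> L \<and> d \<notin> covered (Mupto n V L j)
          \<and> d(q := Some DBul) \<notin> covered (Mupto n V L j))"
  proof
    assume "\<exists>c0. (c0, d) \<in> New"
    then obtain c0 where g: "gedge n V L c0 d" and nd: "d \<notin> covered (Mupto n V L j)"
      and nc: "c0 \<notin> covered (Mupto n V L j)" and dm: "dmatch n (the (c0 q)) (the (d q))"
      unfolding New_def by blast
    have xy: "the (c0 q) = DBul" "the (d q) = DPlus (n-1)" using dm2[OF cls' dm] by auto
    have dq: "d q = Some (DPlus (n-1))" using dom_some[OF dd qV] xy by simp
    have dc0: "dom c0 = V" using g unfolding gedge_def zk_cell_def by blast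
    have c0q: "c0 q = Some DBul" using dom_some[OF dc0 qV] xy by simp
    have "ddim n (the (d q)) + 1 = ddim n (the (c0 q))" using xy n1 by (simp add: ddim_def)
    from gedge_other[OF fin g qV this] have e: "d = c0(q := d q)" .
    have c0e: "c0 = d(q := Some DBul)"
    proof
      fix i show "c0 i = (d(q := Some DBul)) i"
      proof (cases "i = q")
        case True then show ?thesis using c0q by simp
      next
        case False
        have "d i = (c0(q := d q)) i" using e by (rule fun_cong)
        then show ?thesis using False by simp
      qed
    qed
    have "supp c0 \<in> L" using g unfolding gedge_def zk_cell_def by blast
    then have "insert q (supp d) \<in> L" unfolding c0e supp_upd by simp
    then show "d q = Some (DPlus (n-1)) \<and> insert q (supp d) \<in> L \<and> d \<notin> covered (Mupto n V L j)
          \<and> d(q := Some DBul) \<notin> covered (Mupto n V L j)" using dq nd nc c0e by simp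
  next
    assume a: "d q = Some (DPlus (n-1)) \<and> insert q (supp d) \<in> L \<and> d \<notin> covered (Mupto n V L j)
          \<and> d(q := Some DBul) \<notin> covered (Mupto n V L j)"
    have "gedge n V L (d(q := Some DBul)) d" using gedge_PB[OF fin n1 dl qV z] a by blast
    moreover have "dmatch n (the ((d(q := Some DBul)) q)) (the (d q))"
      using a unfolding dmatch_def by simp
    ultimately have "(d(q := Some DBul), d) \<in> New" using a unfolding New_def by simp
    then show "\<exists>c0. (c0, d) \<in> New" by blast
  qed
  show ?thesis unfolding M covered_Un using C1 C2 covered_iff[of d New] by blast
qed


definition cls :: "nat \<Rightarrow> nat set \<Rightarrow> pcell \<Rightarrow> bool" where
  "cls n V d = (dom d = V \<and> (\<forall>i\<in>V. d i \<in> {Some (DMinus 0), Some (DPlus (n-1)), Some DBul}))"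

definition allm :: "nat set \<Rightarrow> nat \<Rightarrow> pcell \<Rightarrow> bool" where
  "allm V j d = (\<forall>i\<in>pre V j. d i = Some (DMinus 0))"

definition shp :: "nat \<Rightarrow> nat set \<Rightarrow> nat \<Rightarrow> pcell \<Rightarrow> nat \<Rightarrow> bool" where
  "shp n V j d p = (d p = Some (DPlus (n-1)) \<and> p \<in> pre V j \<and>
     (\<forall>i\<in>pre V j. d i \<noteq> Some (DMinus 0) \<longrightarrow> i = p \<or> (d i = Some DBul \<and> p < i)))"

definition good :: "nat set set \<Rightarrow> nat set \<Rightarrow> nat \<Rightarrow> pcell \<Rightarrow> nat \<Rightarrow> bool" where
  "good L V j d p = (insert p (supp d) \<notin> L \<and>
     (\<forall>i\<in>pre V j. d i = Some DBul \<longrightarrow> insert p (supp d) - {i} \<in> L))"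

lemma cls_zk: assumes "n \<ge> 1" "cls n V d" "supp d \<in> L" shows "zk_cell n V L d"
proof -
  have "\<forall>i\<in>V. dcell_ok n (the (d i))"
  proof
    fix i assume "i \<in> V"
    then have "d i \<in> {Some (DMinus 0), Some (DPlus (n-1)), Some DBul}" using assms(2) unfolding cls_def by blast
    then show "dcell_ok n (the (d i))" using assms(1) by (auto simp: dcell_ok_def)
  qed
  then show ?thesis using assms(2,3) unfolding cls_def zk_cell_def by blast
qed

lemma shp_unique: assumes "shp n V j d p" "shp n V j d p'" shows "p' = p"
proof -
  have a: "d p' = Some (DPlus (n-1))" "p' \<in> pre V j" using assms(2) unfolding shp_def by blast+
  have b: "\<forall>i\<in>pre V j. d i \<noteq> Some (DMinus 0) \<longrightarrow> i = p \<or> (d i = Some DBul \<and> p < i)"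
    using assms(1) unfolding shp_def by blast
  have "d p' \<noteq> Some (DMinus 0)" "d p' \<noteq> Some DBul" using a by simp_all
  then show ?thesis using a(2) b by blast
qed

lemma pre_facts: assumes "finite V" "j < card V" "q = sorted_list_of_set V ! j"
  shows "pre V (Suc j) = insert q (pre V j)" "q \<notin> pre V j" "\<forall>i\<in>pre V j. i < q" "q \<in> V"
proof -
  show "pre V (Suc j) = insert q (pre V j)" using pre_Suc[OF assms(1,2)] assms(3) by simp
  show "\<forall>i\<in>pre V j. i < q" using pre_lt[OF assms(1,2)] assms(3) by blast
  then show "q \<notin> pre V j" by blast
  show "q \<in> V" using nth_in[OF assms(1,2)] assms(3) by simp
qed

lemma good_step:
  assumes dl: "downcl L" and pq: "p \<noteq> q"
    and agree: "\<forall>i\<in>P. e i = d i" and se: "supp e = supp d - {q}" and dq: "d q = Some DBul" and that: "pre V j = P"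
  shows "(good L V j d p \<and> \<not> good L V j e p) \<longleftrightarrow>
         (insert p (supp d) \<notin> L \<and> (\<forall>i\<in>insert q P. d i = Some DBul \<longrightarrow> insert p (supp d) - {i} \<in> L))"
proof -
  have ins: "insert p (supp e) = insert p (supp d) - {q}" using se pq by auto
  have "good L V j d p \<longleftrightarrow> insert p (supp d) \<notin> L \<and> (\<forall>i\<in>P. d i = Some DBul \<longrightarrow> insert p (supp d) - {i} \<in> L)"
    unfolding good_def that ..
  moreover have "good L V j e p \<longleftrightarrow> insert p (supp d) - {q} \<notin> L \<and> (\<forall>i\<in>P. d i = Some DBul \<longrightarrow> insert p (supp d) - {q} - {i} \<in> L)"
  proof -
    have g1: "good L V j e p \<longleftrightarrow> insert p (supp e) \<notin> L \<and> (\<forall>i\<in>P. e i = Some DBul \<longrightarrow> insert p (supp e) - {i} \<in> L)"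
      unfolding good_def that ..
    have g2: "(\<forall>i\<in>P. e i = Some DBul \<longrightarrow> insert p (supp e) - {i} \<in> L) \<longleftrightarrow> (\<forall>i\<in>P. d i = Some DBul \<longrightarrow> insert p (supp e) - {i} \<in> L)"
      using agree by (metis (no_types, lifting))
    show ?thesis unfolding g1 g2 unfolding ins by (simp only: Diff_insert2[symmetric] insert_commute)
  qed
  moreover have "\<And>i. insert p (supp d) - {i} \<in> L \<Longrightarrow> insert p (supp d) - {q} - {i} \<in> L"
    by (rule downclD[OF dl]) auto
  moreover have "(\<forall>i\<in>insert q P. d i = Some DBul \<longrightarrow> insert p (supp d) - {i} \<in> L) \<longleftrightarrow>
     insert p (supp d) - {q} \<in> L \<and> (\<forall>i\<in>P. d i = Some DBul \<longrightarrow> insert p (supp d) - {i} \<in> L)"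
    using dq by blast
  ultimately show ?thesis by blast
qed


lemma cls_upd: "cls n V d \<Longrightarrow> q \<in> V \<Longrightarrow> x \<in> {DMinus 0, DPlus (n-1), DBul} \<Longrightarrow> cls n V (d(q := Some x))"
  unfolding cls_def by auto

lemma lemC:
  assumes fin: "finite V" and n1: "n \<ge> 1" and dl: "downcl L"
  shows "j \<le> card V \<Longrightarrow> cls n V d \<Longrightarrow> supp d \<in> L \<Longrightarrow> allm V j d \<or> (\<exists>p. shp n V j d p) \<Longrightarrow>
    (d \<notin> covered (Mupto n V L j) \<longleftrightarrow> allm V j d \<or> (\<exists>p. shp n V j d p \<and> good L V j d p))"
proof (induction j arbitrary: d)
  case 0
  then show ?case by (simp add: allm_def covered_def)
next
  case (Suc j)
  define q where "q = sorted_list_of_set V ! j"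
  have jl: "j < card V" using Suc.prems(1) by simp
  note pf = pre_facts[OF fin jl q_def]
  have dcl: "d q \<in> {Some (DMinus 0), Some (DPlus (n-1)), Some DBul}" using Suc.prems(2) pf(4) unfolding cls_def by blast
  have z: "zk_cell n V L d" by (rule cls_zk[OF n1 Suc.prems(2,3)])
  note st = step[OF fin n1 dl jl q_def z dcl]
  note IH = Suc.IH
  have jle: "j \<le> card V" using jl by simp
  consider (M) "d q = Some (DMinus 0)" | (P) "d q = Some (DPlus (n-1))" | (B) "d q = Some DBul" using dcl by blast
  then show ?case
  proof cases
    case M
    have a1: "allm V (Suc j) d \<longleftrightarrow> allm V j d" unfolding allm_def pf(1) using M by simp
    have s1: "\<And>p. shp n V (Suc j) d p \<longleftrightarrow> shp n V j d p"
    proof -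
      fix p
      show "shp n V (Suc j) d p \<longleftrightarrow> shp n V j d p"
      proof
        assume h: "shp n V (Suc j) d p"
        then have "p \<noteq> q" using M unfolding shp_def by auto
        then show "shp n V j d p" using h unfolding shp_def pf(1) by blast
      next
        assume h: "shp n V j d p"
        then show "shp n V (Suc j) d p" using M unfolding shp_def pf(1) by simp
      qed
    qed
    have g1: "\<And>p. good L V (Suc j) d p \<longleftrightarrow> good L V j d p" unfolding good_def pf(1) using M by simp
    have c1: "d \<in> covered (Mupto n V L (Suc j)) \<longleftrightarrow> d \<in> covered (Mupto n V L j)" using st M by simp
    have hyp: "allm V j d \<or> (\<exists>p. shp n V j d p)" using Suc.prems(4) a1 s1 by blast
    show ?thesis unfolding c1 a1 s1 g1 by (rule IH[OF jle Suc.prems(2,3) hyp])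
  next
    case P
    have na: "\<not> allm V (Suc j) d" unfolding allm_def pf(1) using P by simp
    then obtain p where sp: "shp n V (Suc j) d p" using Suc.prems(4) by blast
    have pq: "p = q"
    proof -
      have "q \<in> pre V (Suc j)" using pf(1) by simp
      moreover have "d q \<noteq> Some (DMinus 0)" "d q \<noteq> Some DBul" using P by simp_all
      ultimately show ?thesis using sp unfolding shp_def by blast
    qed
    have am: "allm V j d" unfolding allm_def
    proof
      fix i assume i: "i \<in> pre V j"
      then have iq: "i < q" using pf(3) by blast
      have "i \<in> pre V (Suc j)" using pf(1) i by simp
      then have "d i \<noteq> Some (DMinus 0) \<longrightarrow> i = p \<or> (d i = Some DBul \<and> p < i)" using sp unfolding shp_def by blast
      then show "d i = Some (DMinus 0)" using iq pq by auto
    qed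
    have nd: "d \<notin> covered (Mupto n V L j)" using IH[OF jle Suc.prems(2,3)] am by blast
    have shpq: "\<And>p'. shp n V (Suc j) d p' \<longleftrightarrow> p' = q"
      using shp_unique sp pq by blast
    show ?thesis
    proof (cases "insert q (supp d) \<in> L")
      case True
      let ?f = "d(q := Some DBul)"
      have cf: "cls n V ?f" by (rule cls_upd[OF Suc.prems(2) pf(4)]) simp
      have sf: "supp ?f \<in> L" using True unfolding supp_upd by simp
      have af: "allm V j ?f" using am pf(2) unfolding allm_def by auto
      have nf: "?f \<notin> covered (Mupto n V L j)" using IH[OF jle cf sf] af by blast
      have "d \<in> covered (Mupto n V L (Suc j))" using st P True nd nf by blast
      moreover have "\<not> good L V (Suc j) d q" using True unfolding good_def by blast
      ultimately show ?thesis using na shpq by auto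
    next
      case False
      have "d \<notin> covered (Mupto n V L (Suc j))" using st P False nd by simp
      moreover have "good L V (Suc j) d q"
        unfolding good_def
      proof
        show "insert q (supp d) \<notin> L" by (rule False)
        show "\<forall>i\<in>pre V (Suc j). d i = Some DBul \<longrightarrow> insert q (supp d) - {i} \<in> L"
          unfolding pf(1) using P am unfolding allm_def by auto
      qed
      ultimately show ?thesis using sp pq by blast
    qed
  next
    case B
    have na: "\<not> allm V (Suc j) d" unfolding allm_def pf(1) using B by simp
    then obtain p where sp: "shp n V (Suc j) d p" using Suc.prems(4) by blast
    have pq: "p \<noteq> q" using sp B unfolding shp_def by auto
    have sj: "shp n V j d p" using sp pq unfolding shp_def pf(1) by blast
    have naj: "\<not> allm V j d" using sj unfolding shp_def allm_def by force
    have IHd: "d \<notin> covered (Mupto n V L j) \<longleftrightarrow> good L V j d p"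
      using IH[OF jle Suc.prems(2,3)] sj naj shp_unique by blast
    let ?e = "d(q := Some (DPlus (n-1)))"
    have ce: "cls n V ?e" by (rule cls_upd[OF Suc.prems(2) pf(4)]) simp
    have sue: "supp ?e = supp d - {q}" unfolding supp_upd by simp
    have se: "supp ?e \<in> L" unfolding sue by (rule downclD[OF dl Suc.prems(3)]) blast
    have agree: "\<forall>i\<in>pre V j. ?e i = d i" using pf(2) by auto
    have sje: "shp n V j ?e p" using sj pq agree unfolding shp_def by auto
    have naje: "\<not> allm V j ?e" using sje unfolding shp_def allm_def by force
    have IHe: "?e \<notin> covered (Mupto n V L j) \<longleftrightarrow> good L V j ?e p"
      using IH[OF jle ce se] sje naje shp_unique by blast
    have c1: "d \<notin> covered (Mupto n V L (Suc j)) \<longleftrightarrow> d \<notin> covered (Mupto n V L j) \<and> ?e \<in> covered (Mupto n V L j)"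
      using st B by auto
    have gs: "(good L V j d p \<and> \<not> good L V j ?e p) \<longleftrightarrow> good L V (Suc j) d p"
      unfolding good_def[of L V "Suc j"] pf(1)
      by (rule good_step[OF dl pq agree sue B refl])
    have shpp: "\<And>p'. shp n V (Suc j) d p' \<longleftrightarrow> p' = p"
      using shp_unique sp by blast
    have ex: "(\<exists>p'. shp n V (Suc j) d p' \<and> good L V (Suc j) d p') \<longleftrightarrow> good L V (Suc j) d p"
      using shpp by auto
    show ?thesis unfolding c1 IHd ex using IHe gs na by blast
  qed
qed


lemma Mupto_Suc_sub: "Mupto n V L k \<subseteq> Mupto n V L (Suc k)"
  by (simp only: Mupto.simps) blast

lemma Mupto_mono: "k \<le> l \<Longrightarrow> Mupto n V L k \<subseteq> Mupto n V L l"
proof (induction l)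
  case 0 then show ?case by simp
next
  case (Suc l)
  show ?case
  proof (cases "k = Suc l")
    case True then show ?thesis by simp
  next
    case False
    then have "k \<le> l" using Suc.prems by simp
    then show ?thesis using Suc.IH Mupto_Suc_sub by blast
  qed
qed

lemma covered_mono: "A \<subseteq> B \<Longrightarrow> covered A \<subseteq> covered B"
  unfolding covered_def by blast

lemma lemT:
  assumes fin: "finite V" and n1: "n \<ge> 1" and dl: "downcl L" and cl: "cls n V c"
    and sL: "supp c \<in> L" and pV: "p \<in> V" and cp: "c p = Some (DPlus (n-1))"
    and uniq: "\<forall>i\<in>V. c i = Some (DPlus (n-1)) \<longrightarrow> i = p"
  shows "c \<in> Crit n V L \<longleftrightarrow> (\<forall>i\<in>supp c. p < i) \<and> insert p (supp c) \<notin> L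
           \<and> (\<forall>i\<in>supp c. insert p (supp c) - {i} \<in> L)"
proof -
  have z: "zk_cell n V L c" by (rule cls_zk[OF n1 cl sL])
  have dc: "dom c = V" using cl unfolding cls_def by blast
  have suppV: "supp c \<subseteq> V" using dc unfolding supp_def by blast
  have crit: "c \<in> Crit n V L \<longleftrightarrow> c \<notin> covered (Mupto n V L (card V))"
    unfolding Crit_def M_L_def using z by simp
  have vals: "\<And>i. i \<in> V \<Longrightarrow> c i \<in> {Some (DMinus 0), Some (DPlus (n-1)), Some DBul}"
    using cl unfolding cls_def by blast
  have pnb: "p \<notin> supp c" using cp unfolding supp_def by simp
  show ?thesis
  proof (cases "\<forall>i\<in>supp c. p < i")
    case True
    have sh: "shp n V (card V) c p" unfolding shp_def pre_full[OF fin]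
    proof (intro conjI ballI impI)
      show "c p = Some (DPlus (n-1))" by (rule cp)
      show "p \<in> V" by (rule pV)
      fix i assume i: "i \<in> V" "c i \<noteq> Some (DMinus 0)"
      then consider "c i = Some (DPlus (n-1))" | "c i = Some DBul" using vals by blast
      then show "i = p \<or> c i = Some DBul \<and> p < i"
      proof cases
        case 1 then show ?thesis using uniq i by blast
      next
        case 2 then have "i \<in> supp c" unfolding supp_def by simp
        then show ?thesis using True 2 by blast
      qed
    qed
    have na: "\<not> allm V (card V) c" unfolding allm_def pre_full[OF fin] using pV cp by force
    have "c \<notin> covered (Mupto n V L (card V)) \<longleftrightarrow> good L V (card V) c p"
      using lemC[OF fin n1 dl le_refl cl sL] sh na shp_unique by blast
    moreover have "good L V (card V) c p \<longleftrightarrow> insert p (supp c) \<notin> L \<and> (\<forall>i\<in>supp c. insert p (supp c) - {i} \<in> L)"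
      unfolding good_def pre_full[OF fin] using suppV unfolding supp_def by auto
    ultimately show ?thesis using crit True by blast
  next
    case False
    then obtain b where b: "b \<in> supp c" "b \<le> p" by force
    have fs: "finite (supp c)" using suppV fin by (rule finite_subset)
    define a where "a = Min (supp c)"
    have aS: "a \<in> supp c" unfolding a_def using b(1) fs by (rule_tac Min_in) auto
    have ab: "a \<le> b" unfolding a_def using fs b(1) by simp
    have ap: "a < p" using ab b pnb aS by (metis le_neq_implies_less order_trans)
    have aV: "a \<in> V" using aS suppV by blast
    have ca: "c a = Some DBul" using aS unfolding supp_def by simp
    obtain j where j: "j < card V" "sorted_list_of_set V ! j = a" "pre V j = {i\<in>V. i < a}"
      using find_index[OF fin aV] by blast
    have am: "allm V j c" unfolding allm_def j(3)
    proof
      fix i assume i: "i \<in> {i\<in>V. i < a}"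
      have "i \<notin> supp c" using i fs unfolding a_def by (metis (no_types, lifting) Min_le mem_Collect_eq not_le)
      then have "c i \<noteq> Some DBul" unfolding supp_def by simp
      moreover have "c i \<noteq> Some (DPlus (n-1))" using uniq i ap by auto
      ultimately show "c i = Some (DMinus 0)" using vals i by blast
    qed
    have jle: "j \<le> card V" using j(1) by simp
    have nc: "c \<notin> covered (Mupto n V L j)" using lemC[OF fin n1 dl jle cl sL] am by blast
    let ?e = "c(a := Some (DPlus (n-1)))"
    have ce: "cls n V ?e" by (rule cls_upd[OF cl aV]) simp
    have se: "supp ?e \<in> L" unfolding supp_upd by (simp, rule downclD[OF dl sL]) blast
    have ae: "allm V j ?e" using am unfolding allm_def j(3) by auto
    have ne: "?e \<notin> covered (Mupto n V L j)" using lemC[OF fin n1 dl jle ce se] ae by blast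
    have cla: "c a \<in> {Some (DMinus 0), Some (DPlus (n-1)), Some DBul}" using ca by simp
    have "c \<in> covered (Mupto n V L (Suc j))"
      using step[OF fin n1 dl j(1) j(2)[symmetric] z cla] ca nc ne by blast
    moreover have "covered (Mupto n V L (Suc j)) \<subseteq> covered (Mupto n V L (card V))"
      using covered_mono Mupto_mono j(1) by (metis Suc_leI)
    ultimately have "c \<notin> Crit n V L" using crit by blast
    then show ?thesis using False by blast
  qed
qed


lemma supp_restrict: "supp c \<subseteq> I \<Longrightarrow> supp (c |` I) = supp c"
  unfolding supp_def restrict_map_def by auto

theorem lemma3p7:
  fixes n m :: nat and K :: "nat set set" and c :: pcell and I :: "nat set"
  assumes "n \<ge> 1"
    and "is_complex {1..m} K"
    and "zk_cell n {1..m} K c"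
    and "\<forall>i\<in>{1..m}. c i \<in> {Some (DMinus 0), Some (DPlus (n - 1)), Some DBul}"
    and "cplus n c \<noteq> None"
    and "\<forall>i\<in>{1..m}. c i = Some (DPlus (n - 1)) \<longleftrightarrow> cplus n c = Some i"
    and "I = insert (the (cplus n c)) (supp c)"
  shows "c \<in> Crit n {1..m} K \<longleftrightarrow>
           (c |` I \<in> Crit n I (full_sub K I) \<and> full_sub K I = Pow I - {I})"
proof -
  let ?V = "{1..m}::nat set"
  have ex: "\<exists>i. c i = Some (DPlus (n - 1))" using assms(5) unfolding cplus_def by (auto split: if_splits)
  define p where "p = (LEAST i. c i = Some (DPlus (n - 1)))"
  have cpl: "cplus n c = Some p" unfolding cplus_def p_def using ex by simp
  have cp: "c p = Some (DPlus (n-1))" unfolding p_def using ex by (rule LeastI_ex)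
  have dc: "dom c = ?V" using assms(3) unfolding zk_cell_def by blast
  have pV: "p \<in> ?V" using cp dc by blast
  have uniq: "\<forall>i\<in>?V. c i = Some (DPlus (n-1)) \<longrightarrow> i = p" using assms(6) cpl by simp
  have Idef: "I = insert p (supp c)" using assms(7) cpl by simp
  have dl: "downcl K" using assms(2) unfolding is_complex_def downcl_def by blast
  have cl: "cls n ?V c" unfolding cls_def using dc assms(4) by blast
  have sK: "supp c \<in> K" using assms(3) unfolding zk_cell_def by blast
  have suppV: "supp c \<subseteq> ?V" using dc unfolding supp_def by blast
  have IV: "I \<subseteq> ?V" using Idef suppV pV by blast
  have finI: "finite I" using IV finite_subset by blast
  note T1 = lemT[OF finite_atLeastAtMost assms(1) dl cl sK pV cp uniq]
  have sr: "supp (c |` I) = supp c" by (rule supp_restrict) (use Idef in blast)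
  have dlI: "downcl (full_sub K I)" using dl unfolding downcl_def full_sub_def by blast
  have dI: "dom (c |` I) = I" using IV dc by (simp add: dom_restrict Int_absorb1)
  have clI: "cls n I (c |` I)" unfolding cls_def using dI IV assms(4) by auto
  have sKI: "supp (c |` I) \<in> full_sub K I" unfolding sr full_sub_def using sK Idef by blast
  have pI: "p \<in> I" using Idef by blast
  have cpI: "(c |` I) p = Some (DPlus (n-1))" using cp pI by simp
  have uniqI: "\<forall>i\<in>I. (c |` I) i = Some (DPlus (n-1)) \<longrightarrow> i = p" using uniq IV by auto
  note T2 = lemT[OF finI assms(1) dlI clI sKI pI cpI uniqI, unfolded sr]
  have e1: "insert p (supp c) \<in> full_sub K I \<longleftrightarrow> insert p (supp c) \<in> K"
    unfolding full_sub_def Idef by blast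
  have e2: "\<And>i. insert p (supp c) - {i} \<in> full_sub K I \<longleftrightarrow> insert p (supp c) - {i} \<in> K"
    unfolding full_sub_def Idef by blast
  have pnb: "p \<notin> supp c" using cp unfolding supp_def by simp
  have fs: "full_sub K I = Pow I - {I} \<longleftrightarrow> insert p (supp c) \<notin> K \<and> (\<forall>i\<in>supp c. insert p (supp c) - {i} \<in> K)"
  proof
    assume h: "full_sub K I = Pow I - {I}"
    have "I \<notin> full_sub K I" using h by blast
    then have "I \<notin> K" unfolding full_sub_def by blast
    moreover have "\<forall>i\<in>supp c. I - {i} \<in> K"
    proof
      fix i assume "i \<in> supp c"
      then have "I - {i} \<in> Pow I - {I}" using Idef by blast
      then show "I - {i} \<in> K" using h unfolding full_sub_def by blast
    qed
    ultimately show "insert p (supp c) \<notin> K \<and> (\<forall>i\<in>supp c. insert p (supp c) - {i} \<in> K)" using Idef by simp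
  next
    assume h: "insert p (supp c) \<notin> K \<and> (\<forall>i\<in>supp c. insert p (supp c) - {i} \<in> K)"
    show "full_sub K I = Pow I - {I}"
    proof
      show "full_sub K I \<subseteq> Pow I - {I}" using h Idef unfolding full_sub_def by blast
      show "Pow I - {I} \<subseteq> full_sub K I"
      proof
        fix \<sigma> assume s: "\<sigma> \<in> Pow I - {I}"
        then obtain i where i: "i \<in> I" "i \<notin> \<sigma>" by blast
        have "\<sigma> \<in> K"
        proof (cases "i = p")
          case True
          then have "\<sigma> \<subseteq> supp c" using s i Idef by blast
          then show ?thesis using downclD[OF dl sK] by blast
        next
          case False
          then have "i \<in> supp c" using i Idef by blast
          then have "I - {i} \<in> K" using h Idef by blast
          moreover have "\<sigma> \<subseteq> I - {i}" using s i by blast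
          ultimately show ?thesis using downclD[OF dl] by blast
        qed
        then show "\<sigma> \<in> full_sub K I" using s unfolding full_sub_def by blast
      qed
    qed
  qed
  show ?thesis unfolding T1 T2 e1 e2 fs by blast
qed


end
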